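(* Let $(\mathcal V,\mathcal W,\lambda)$ be a FTvN system with center $C$. Then $C=\{u\in\mathcal V:[u]=\{u\}\}$.
   Context: A Fan-Theobald-von Neumann (FTvN) system is a triple $(\mathcal V,\mathcal W,\lambda)$ where $\mathcal V,\mathcal W$ are real inner product spaces and $\lambda:\mathcal V\to\mathcal W$ is a map such that: (A1) $\|\lambda(x)\|=\|x\|$ for all $x$; (A2) $\langle x,y\rangle\le\langle\lambda(x),\lambda(y)\rangle$ for all $x,y$; (A3) for every $c\in\mathcal V$ and $q\in\lambda(\mathcal V)$ there exists $x$ with $\lambda(x)=q$ and $\langle c,x\rangle=\langle\lambda(c),\lambda(x)\rangle$. The $\lambda$-orbit of $u$ is $[u]=\{x:\lambda(x)=\lambda(u)\}$. Elements $x,y$ commute if $\langle x,y\rangle=\langle\lambda(x),\lambda(y)\rangle$. The center $C$ is the set of elements of $\mathcal V$ commuting with every element of $\mathcal V$. *)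

theory Defs
  imports "HOL-Analysis.Analysis"
begin

definition FTvN_system :: "('v::real_inner \<Rightarrow> 'w::real_inner) \<Rightarrow> bool" where
  "FTvN_system lam \<longleftrightarrow>
     (\<forall>x. norm (lam x) = norm x) \<and>
     (\<forall>x y. inner x y \<le> inner (lam x) (lam y)) \<and>
     (\<forall>c q. q \<in> range lam \<longrightarrow> (\<exists>x. lam x = q \<and> inner c x = inner (lam c) (lam x)))"

definition lambda_orbit :: "('v \<Rightarrow> 'w) \<Rightarrow> 'v \<Rightarrow> 'v set" where
  "lambda_orbit lam u = {x. lam x = lam u}"

definition commute :: "('v::real_inner \<Rightarrow> 'w::real_inner) \<Rightarrow> 'v \<Rightarrow> 'v \<Rightarrow> bool" where
  "commute lam x y \<longleftrightarrow> inner x y = inner (lam x) (lam y)"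

definition center :: "('v::real_inner \<Rightarrow> 'w::real_inner) \<Rightarrow> 'v set" where
  "center lam = {c. \<forall>x. commute lam c x}"

end

theory Submission
  imports Defs
begin

theorem proposition6p3:
  fixes lam :: "'v::real_inner \<Rightarrow> 'w::real_inner"
  assumes "FTvN_system lam"
  shows "center lam = {u. lambda_orbit lam u = {u}}"
proof
  have A1: "\<And>x. norm (lam x) = norm x"
    and A3: "\<And>c q. q \<in> range lam \<Longrightarrow> \<exists>x. lam x = q \<and> inner c x = inner (lam c) (lam x)"
    using assms unfolding FTvN_system_def by blast+
  show "center lam \<subseteq> {u. lambda_orbit lam u = {u}}"
  proof
    fix u assume "u \<in> center lam"
    hence cu: "\<And>x. inner u x = inner (lam u) (lam x)"
      unfolding center_def commute_def by blast
    have "x = u" if "lam x = lam u" for x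
    proof -
      have "inner u x = inner (lam u) (lam u)" using cu that by simp
      also have "\<dots> = (norm u)^2" using A1 by (simp add: power2_norm_eq_inner[symmetric])
      finally have ux: "inner u x = (norm u)^2" .
      have nx: "norm x = norm u" using A1 that by metis
      have "(norm (u - x))^2 = (norm u)^2 - 2 * inner u x + (norm x)^2"
        by (simp add: power2_norm_eq_inner inner_diff_left inner_diff_right inner_commute)
      also have "\<dots> = 0" using ux nx by simp
      finally show ?thesis by simp
    qed
    thus "u \<in> {u. lambda_orbit lam u = {u}}"
      unfolding lambda_orbit_def by auto
  qed
  show "{u. lambda_orbit lam u = {u}} \<subseteq> center lam"
  proof
    fix u assume "u \<in> {u. lambda_orbit lam u = {u}}"
    hence orb: "\<And>x. lam x = lam u \<Longrightarrow> x = u"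
      unfolding lambda_orbit_def by blast
    have "commute lam u c" for c
    proof -
      obtain x where "lam x = lam u" "inner c x = inner (lam c) (lam x)"
        using A3[of "lam u" c] by blast
      with orb have "inner c u = inner (lam c) (lam u)" by metis
      thus ?thesis unfolding commute_def by (simp add: inner_commute)
    qed
    thus "u \<in> center lam" unfolding center_def by blast
  qed
qed

end
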